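(* Fix real numbers $L,\ell_1,\ell_2>0$. There is a unique set map $B_L^{\ell_1,\ell_2}:\mathcal{G}(L,\ell_1+\ell_2)\to\mathcal{G}(L,\ell_2+\ell_1)$ such that $B_L^{\ell_1,\ell_2}(\phi_1\otimes\phi_2)=\phi_2\otimes\phi_1$ for all $\ell'_1,\ell'_2>0$ with $\ell'_1+\ell'_2=L$ and all $\phi_1\in\mathcal{G}(\ell'_1,\ell_1)$, $\phi_2\in\mathcal{G}(\ell'_2,\ell_2)$. Moreover, $B_L^{\ell_1,\ell_2}$ is a homeomorphism.
   Context: $\mathcal{G}$ is the category whose objects are the real numbers $\ell>0$, with $\mathcal{G}(\ell_1,\ell_2)$ the set of nondecreasing homeomorphisms $[0,\ell_1]\to[0,\ell_2]$ (necessarily sending $0\mapsto0$, $\ell_1\mapsto\ell_2$), equipped with the compact-open topology, and composition given by composition of maps. For $\phi_i:[0,\ell_i]\to[0,\ell'_i]$ ($i=1,2$), $\phi_1\otimes\phi_2:[0,\ell_1+\ell_2]\to[0,\ell'_1+\ell'_2]$ is defined by $(\phi_1\otimes\phi_2)(t)=\phi_1(t)$ for $0\le t\le\ell_1$ and $\phi_2(t-\ell_1)+\ell'_1$ for $\ell_1\le t\le\ell_1+\ell_2$. Note $\ell_1+\ell_2=\ell_2+\ell_1$ as objects, so $B_L^{\ell_1,\ell_2}$ is a self-map of the space $\mathcal{G}(L,\ell_1+\ell_2)$. *)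

theory Defs
  imports "HOL-Analysis.Analysis"
begin

text \<open>Morphisms of the category G: nondecreasing homeomorphisms [0,a] -> [0,b],
  represented as functions real => real that are extensional (undefined) outside [0,a].\<close>
definition Gmor :: "real \<Rightarrow> real \<Rightarrow> (real \<Rightarrow> real) set" where
  "Gmor a b = {f. f \<in> extensional {0..a} \<and> mono_on {0..a} f \<and>
                  (\<exists>g. homeomorphism {0..a} {0..b} f g)}"

definition compact_open :: "real \<Rightarrow> real \<Rightarrow> (real \<Rightarrow> real) topology" where
  "compact_open a b = topology (arbitrary union_of
      ((finite intersection_of
         (\<lambda>S. \<exists>K U. compact K \<and> K \<subseteq> {0..a} \<and> open U \<and> S = {f \<in> Gmor a b. f ` K \<subseteq> U}))
       relative_to Gmor a b))"

text \<open>Monoidal product: phi1 : [0,a] -> [0,b], phi2 : [0,c] -> [0,d];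
  result [0,a+c] -> [0,b+d].\<close>
definition tensor :: "real \<Rightarrow> real \<Rightarrow> real \<Rightarrow> (real \<Rightarrow> real) \<Rightarrow> (real \<Rightarrow> real) \<Rightarrow> (real \<Rightarrow> real)" where
  "tensor a c b phi1 phi2 =
     restrict (\<lambda>t. if t \<le> a then phi1 t else phi2 (t - a) + b) {0..a+c}"

end

theory Submission imports Defs begin

lemma Gmor_props:
  assumes f: "f \<in> Gmor L M" and L: "L > 0"
  shows "continuous_on {0..L} f" "f ` {0..L} = {0..M}" "f \<in> extensional {0..L}"
    "\<And>x y. x \<in> {0..L} \<Longrightarrow> y \<in> {0..L} \<Longrightarrow> x < y \<Longrightarrow> f x < f y"
    "f 0 = 0" "f L = M"
proof -
  from f obtain g where ex: "f \<in> extensional {0..L}" and mo: "mono_on {0..L} f"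
    and h: "homeomorphism {0..L} {0..M} f g" unfolding Gmor_def by auto
  show c: "continuous_on {0..L} f" using homeomorphism_cont1[OF h] .
  show im: "f ` {0..L} = {0..M}" using homeomorphism_image1[OF h] .
  show "f \<in> extensional {0..L}" by fact
  have inj: "inj_on f {0..L}" by (rule inj_onI) (metis homeomorphism_apply1[OF h])
  show sm: "\<And>x y. x \<in> {0..L} \<Longrightarrow> y \<in> {0..L} \<Longrightarrow> x < y \<Longrightarrow> f x < f y"
  proof -
    fix x y assume "x \<in> {0..L}" "y \<in> {0..L}" "x < y"
    then have "f x \<le> f y" using mo unfolding mono_on_def by simp
    moreover have "f x \<noteq> f y" using inj \<open>x \<in> {0..L}\<close> \<open>y \<in> {0..L}\<close> \<open>x < y\<close>
      unfolding inj_on_def by (metis order_less_irrefl)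
    ultimately show "f x < f y" by simp
  qed
  have "f 0 \<in> {0..M}" using im L by auto
  then have "M \<ge> 0" by simp
  then have "0 \<in> f ` {0..L}" "M \<in> f ` {0..L}" using im by auto
  then obtain a b where a: "a \<in> {0..L}" "f a = 0" and b: "b \<in> {0..L}" "f b = M" by auto
  have "f 0 \<in> {0..M}" "f L \<in> {0..M}" using im L by auto
  show "f 0 = 0"
  proof (cases "a = 0")
    case False
    then have "f 0 < f a" using a L by (intro sm) auto
    then show ?thesis using a \<open>f 0 \<in> {0..M}\<close> by simp
  qed (use a in simp)
  show "f L = M"
  proof (cases "b = L")
    case False
    then have "f b < f L" using b L by (intro sm) auto
    then show ?thesis using b \<open>f L \<in> {0..M}\<close> by simp
  qed (use b in simp)
qed

lemma Gmor_intro: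
  assumes L: "L > 0" and ex: "f \<in> extensional {0..L}" and c: "continuous_on {0..L} f"
    and sm: "\<And>x y. x \<in> {0..L} \<Longrightarrow> y \<in> {0..L} \<Longrightarrow> x < y \<Longrightarrow> f x < f y"
    and f0: "f 0 = 0" and fL: "f L = M"
  shows "f \<in> Gmor L M"
proof -
  have mo: "mono_on {0..L} f" unfolding mono_on_def using sm by (metis order_le_less)
  have inj: "inj_on f {0..L}" unfolding inj_on_def using sm by (metis linorder_neq_iff)
  have im: "f ` {0..L} = {0..M}"
  proof
    show "f ` {0..L} \<subseteq> {0..M}"
    proof
      fix y assume "y \<in> f ` {0..L}"
      then obtain x where x: "x \<in> {0..L}" "y = f x" by auto
      have "f 0 \<le> f x" "f x \<le> f L" using mo x L unfolding mono_on_def by auto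
      then show "y \<in> {0..M}" using x f0 fL by simp
    qed
    show "{0..M} \<subseteq> f ` {0..L}"
    proof
      fix y assume "y \<in> {0..M}"
      then obtain x where "0 \<le> x" "x \<le> L" "f x = y" using IVT'[of f 0 y L] c f0 fL L by auto
      then show "y \<in> f ` {0..L}" by auto
    qed
  qed
  obtain g where "homeomorphism {0..L} {0..M} f g"
    using homeomorphism_compact[OF compact_Icc c im inj] by blast
  then show ?thesis unfolding Gmor_def using ex mo by auto
qed

definition sp :: "(real \<Rightarrow> real) \<Rightarrow> real \<Rightarrow> real \<Rightarrow> real" where
  "sp f L a = (THE s. s \<in> {0..L} \<and> f s = a)"

lemma sp_unique:
  assumes f: "f \<in> Gmor L M" and L: "L > 0" and s: "s \<in> {0..L}" "f s = a"
  shows "sp f L a = s"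
  unfolding sp_def
proof (rule the_equality)
  show "s \<in> {0..L} \<and> f s = a" using s by auto
  fix t assume "t \<in> {0..L} \<and> f t = a"
  then show "t = s" using Gmor_props(4)[OF f L, of s t] Gmor_props(4)[OF f L, of t s] s
    by (metis linorder_neq_iff order_less_irrefl)
qed

lemma sp_props:
  assumes f: "f \<in> Gmor L (l1 + l2)" and L: "L > 0" and l: "l1 > 0" "l2 > 0"
  shows "sp f L l1 \<in> {0<..<L}" "f (sp f L l1) = l1"
proof -
  have "l1 \<in> f ` {0..L}" using Gmor_props(2)[OF f L] l by auto
  then obtain s where s: "s \<in> {0..L}" "f s = l1" by auto
  have e: "sp f L l1 = s" using sp_unique[OF f L s] .
  show "f (sp f L l1) = l1" using e s by simp
  have "s \<noteq> 0" "s \<noteq> L" using Gmor_props(5,6)[OF f L] s l by auto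
  then show "sp f L l1 \<in> {0<..<L}" using e s by auto
qed

lemma tensor_Gmor:
  assumes p1: "phi1 \<in> Gmor a b" and p2: "phi2 \<in> Gmor c d" and pos: "a > 0" "c > 0"
  shows "tensor a c b phi1 phi2 \<in> Gmor (a + c) (b + d)"
proof (rule Gmor_intro)
  note P1 = Gmor_props[OF p1 pos(1)] and P2 = Gmor_props[OF p2 pos(2)]
  show "a + c > 0" using pos by simp
  show "tensor a c b phi1 phi2 \<in> extensional {0..a + c}" unfolding tensor_def by simp
  have "continuous_on {0..a+c} (\<lambda>t. if t \<le> a then phi1 t else phi2 (t - a) + b)"
  proof (rule continuous_on_cases_le)
    show "continuous_on {t \<in> {0..a + c}. t \<le> a} phi1"
      by (rule continuous_on_subset[OF P1(1)]) auto
    have "continuous_on {t \<in> {0..a + c}. a \<le> t} (\<lambda>t. t - a)" by (intro continuous_intros)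
    moreover have "(\<lambda>t. t - a) ` {t \<in> {0..a + c}. a \<le> t} \<subseteq> {0..c}" by auto
    ultimately have "continuous_on {t \<in> {0..a + c}. a \<le> t} (\<lambda>t. phi2 (t - a))"
      using continuous_on_compose2[OF P2(1)] by blast
    then show "continuous_on {t \<in> {0..a + c}. a \<le> t} (\<lambda>t. phi2 (t - a) + b)"
      by (intro continuous_intros)
    show "continuous_on {0..a + c} (\<lambda>x. x)" by (intro continuous_intros)
    show "\<And>t. t \<in> {0..a + c} \<Longrightarrow> t = a \<Longrightarrow> phi1 t = phi2 (t - a) + b"
      using P1(6) P2(5) by simp
  qed
  then show "continuous_on {0..a + c} (tensor a c b phi1 phi2)"
    unfolding tensor_def by (rule continuous_on_cong[THEN iffD1, rotated -1]) auto
  fix x y assume xy: "x \<in> {0..a + c}" "y \<in> {0..a + c}" "x < y"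
  show "tensor a c b phi1 phi2 x < tensor a c b phi1 phi2 y"
  proof (cases "y \<le> a")
    case True then show ?thesis using xy P1(4)[of x y] unfolding tensor_def by auto
  next
    case False
    have "phi2 (y - a) > 0" using P2(4)[of 0 "y-a"] P2(5) False xy by auto
    moreover have "phi1 x \<le> b" if "x \<le> a" using P1(2) that xy by auto
    moreover have "phi2 (x - a) < phi2 (y - a)" if "\<not> x \<le> a" using P2(4)[of "x-a" "y-a"] that xy by auto
    ultimately show ?thesis using xy False unfolding tensor_def by auto
  qed
next
  show "tensor a c b phi1 phi2 0 = 0" using Gmor_props(5)[OF p1 pos(1)] pos unfolding tensor_def by simp
  show "tensor a c b phi1 phi2 (a + c) = b + d" using Gmor_props(6)[OF p2 pos(2)] pos unfolding tensor_def by simp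
qed

definition ph1 :: "real \<Rightarrow> real \<Rightarrow> (real \<Rightarrow> real) \<Rightarrow> real \<Rightarrow> real" where
  "ph1 L l1 f = restrict f {0..sp f L l1}"
definition ph2 :: "real \<Rightarrow> real \<Rightarrow> (real \<Rightarrow> real) \<Rightarrow> real \<Rightarrow> real" where
  "ph2 L l1 f = restrict (\<lambda>t. f (t + sp f L l1) - l1) {0..L - sp f L l1}"

lemma decomp:
  assumes f: "f \<in> Gmor L (l1 + l2)" and L: "L > 0" and l: "l1 > 0" "l2 > 0"
  shows "ph1 L l1 f \<in> Gmor (sp f L l1) l1" "ph2 L l1 f \<in> Gmor (L - sp f L l1) l2"
    "f = tensor (sp f L l1) (L - sp f L l1) l1 (ph1 L l1 f) (ph2 L l1 f)"
proof -
  define s where "s = sp f L l1"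
  note S = sp_props[OF f L l, folded s_def]
  note F = Gmor_props[OF f L]
  show "ph1 L l1 f \<in> Gmor (sp f L l1) l1" unfolding ph1_def s_def[symmetric]
  proof (rule Gmor_intro)
    show "0 < s" using S by auto
    show "continuous_on {0..s} (restrict f {0..s})"
      using continuous_on_subset[OF F(1), of "{0..s}"] S
      by (subst continuous_on_cong[of _ _ _ f]) auto
  qed (use S F in auto)
  show "ph2 L l1 f \<in> Gmor (L - sp f L l1) l2" unfolding ph2_def s_def[symmetric]
  proof (rule Gmor_intro)
    show "0 < L - s" using S by auto
    have "continuous_on {0..L-s} (\<lambda>t. t + s)" by (intro continuous_intros)
    moreover have "(\<lambda>t. t + s) ` {0..L-s} \<subseteq> {0..L}" using S by auto
    ultimately have "continuous_on {0..L-s} (\<lambda>t. f (t + s))"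
      using continuous_on_compose2[OF F(1)] by blast
    then have "continuous_on {0..L-s} (\<lambda>t. f (t + s) - l1)" by (intro continuous_intros)
    then show "continuous_on {0..L-s} (restrict (\<lambda>t. f (t + s) - l1) {0..L-s})"
      by (subst continuous_on_cong[of _ _ _ "(\<lambda>t. f (t + s) - l1)"]) auto
    show "\<And>x y. x \<in> {0..L - s} \<Longrightarrow> y \<in> {0..L - s} \<Longrightarrow> x < y \<Longrightarrow>
       restrict (\<lambda>t. f (t + s) - l1) {0..L - s} x < restrict (\<lambda>t. f (t + s) - l1) {0..L - s} y"
      using F(4) S by auto
  qed (use S F in auto)
  show "f = tensor (sp f L l1) (L - sp f L l1) l1 (ph1 L l1 f) (ph2 L l1 f)"
    unfolding ph1_def ph2_def tensor_def s_def[symmetric]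
  proof
    fix t show "f t = restrict (\<lambda>t. if t \<le> s then restrict f {0..s} t else restrict (\<lambda>t. f (t + s) - l1) {0..L - s} (t - s) + l1) {0..s + (L - s)} t"
    proof (cases "t \<in> {0..L}")
      case True
      then show ?thesis using S by (cases "t \<le> s") auto
    next
      case False
      then show ?thesis using F(3) False unfolding extensional_def by auto
    qed
  qed
qed

lemma sp_tensor:
  assumes p1: "phi1 \<in> Gmor a l1" and p2: "phi2 \<in> Gmor c l2" and pos: "a > 0" "c > 0"
  shows "sp (tensor a c l1 phi1 phi2) (a + c) l1 = a"
  using sp_unique[OF tensor_Gmor[OF p1 p2 pos]] pos Gmor_props(6)[OF p1 pos(1)]
  unfolding tensor_def by auto


lemma ph_tensor:
  assumes p1: "phi1 \<in> Gmor a l1" and p2: "phi2 \<in> Gmor c l2" and pos: "a > 0" "c > 0"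
  shows "ph1 (a + c) l1 (tensor a c l1 phi1 phi2) = phi1"
    "ph2 (a + c) l1 (tensor a c l1 phi1 phi2) = phi2"
proof -
  have sp: "sp (tensor a c l1 phi1 phi2) (a + c) l1 = a" using sp_tensor[OF p1 p2 pos] .
  note P1 = Gmor_props[OF p1 pos(1)] and P2 = Gmor_props[OF p2 pos(2)]
  show "ph1 (a + c) l1 (tensor a c l1 phi1 phi2) = phi1"
  proof
    fix t show "ph1 (a + c) l1 (tensor a c l1 phi1 phi2) t = phi1 t"
    proof (cases "t \<in> {0..a}")
      case True then show ?thesis unfolding ph1_def sp using pos by (simp add: tensor_def)
    next
      case False then show ?thesis unfolding ph1_def sp using P1(3) False unfolding extensional_def by auto
    qed
  qed
  show "ph2 (a + c) l1 (tensor a c l1 phi1 phi2) = phi2"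
  proof
    fix t show "ph2 (a + c) l1 (tensor a c l1 phi1 phi2) t = phi2 t"
    proof (cases "t \<in> {0..c}")
      case True
      show ?thesis
      proof (cases "t = 0")
        case True then show ?thesis unfolding ph2_def sp using pos P1(6) P2(5) by (simp add: tensor_def)
      next
        case False then show ?thesis unfolding ph2_def sp using pos \<open>t \<in> {0..c}\<close> by (simp add: tensor_def)
      qed
    next
      case False then show ?thesis unfolding ph2_def sp using P2(3) False unfolding extensional_def by auto
    qed
  qed
qed

definition Bm :: "real \<Rightarrow> real \<Rightarrow> real \<Rightarrow> (real \<Rightarrow> real) \<Rightarrow> (real \<Rightarrow> real)" where
  "Bm L l1 l2 = restrict (\<lambda>f. tensor (L - sp f L l1) (sp f L l1) l2 (ph2 L l1 f) (ph1 L l1 f))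
     (Gmor L (l1 + l2))"

lemma Bm_prop:
  assumes L: "L > 0" and l: "l1 > 0" "l2 > 0" and pos: "a > 0" "c > 0" "a + c = L"
    and p1: "phi1 \<in> Gmor a l1" and p2: "phi2 \<in> Gmor c l2"
  shows "Bm L l1 l2 (tensor a c l1 phi1 phi2) = tensor c a l2 phi2 phi1"
proof -
  have mem: "tensor a c l1 phi1 phi2 \<in> Gmor L (l1 + l2)"
    using tensor_Gmor[OF p1 p2 pos(1,2)] pos(3) by simp
  have sp: "sp (tensor a c l1 phi1 phi2) L l1 = a" using sp_tensor[OF p1 p2 pos(1,2)] pos(3) by simp
  have Lc: "L - a = c" using pos by simp
  have "Bm L l1 l2 (tensor a c l1 phi1 phi2) = tensor (L - a) a l2 phi2 phi1"
    unfolding Bm_def using mem sp ph_tensor[OF p1 p2 pos(1,2)] pos(3) by simp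
  then show ?thesis unfolding Lc .
qed

lemma Bm_mem:
  assumes L: "L > 0" and l: "l1 > 0" "l2 > 0" and f: "f \<in> Gmor L (l1 + l2)"
  shows "Bm L l1 l2 f = tensor (L - sp f L l1) (sp f L l1) l2 (ph2 L l1 f) (ph1 L l1 f)"
    "Bm L l1 l2 f \<in> Gmor L (l2 + l1)"
proof -
  show e: "Bm L l1 l2 f = tensor (L - sp f L l1) (sp f L l1) l2 (ph2 L l1 f) (ph1 L l1 f)"
    unfolding Bm_def using f by simp
  have S: "sp f L l1 \<in> {0<..<L}" using sp_props(1)[OF f L l] .
  have "tensor (L - sp f L l1) (sp f L l1) l2 (ph2 L l1 f) (ph1 L l1 f)
      \<in> Gmor (L - sp f L l1 + sp f L l1) (l2 + l1)"
    using S by (intro tensor_Gmor decomp[OF f L l]) auto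
  then show "Bm L l1 l2 f \<in> Gmor L (l2 + l1)" using e by simp
qed

lemma Bm_PiE:
  assumes L: "L > 0" and l: "l1 > 0" "l2 > 0"
  shows "Bm L l1 l2 \<in> Gmor L (l1 + l2) \<rightarrow>\<^sub>E Gmor L (l2 + l1)"
  using Bm_mem(2)[OF L l] unfolding Bm_def by auto

lemma Bm_unique:
  assumes L: "L > 0" and l: "l1 > 0" "l2 > 0"
    and B: "B \<in> Gmor L (l1 + l2) \<rightarrow>\<^sub>E Gmor L (l2 + l1)"
    and P: "\<forall>l1' l2' phi1 phi2. l1' > 0 \<longrightarrow> l2' > 0 \<longrightarrow> l1' + l2' = L \<longrightarrow>
                phi1 \<in> Gmor l1' l1 \<longrightarrow> phi2 \<in> Gmor l2' l2 \<longrightarrow>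
                B (tensor l1' l2' l1 phi1 phi2) = tensor l2' l1' l2 phi2 phi1"
  shows "B = Bm L l1 l2"
proof
  fix f show "B f = Bm L l1 l2 f"
  proof (cases "f \<in> Gmor L (l1 + l2)")
    case True
    have S: "sp f L l1 \<in> {0<..<L}" using sp_props(1)[OF True L l] .
    note D = decomp[OF True L l]
    have "B f = B (tensor (sp f L l1) (L - sp f L l1) l1 (ph1 L l1 f) (ph2 L l1 f))"
      using D(3) by simp
    also have "\<dots> = tensor (L - sp f L l1) (sp f L l1) l2 (ph2 L l1 f) (ph1 L l1 f)"
      using P S D(1,2) by auto
    also have "\<dots> = Bm L l1 l2 f" using Bm_mem(1)[OF L l True] by simp
    finally show ?thesis .
  next
    case False
    then show ?thesis using B Bm_PiE[OF L l] unfolding PiE_def extensional_def by auto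
  qed
qed

lemma Bm_inv:
  assumes L: "L > 0" and l: "l1 > 0" "l2 > 0" and f: "f \<in> Gmor L (l1 + l2)"
  shows "Bm L l2 l1 (Bm L l1 l2 f) = f"
proof -
  have S: "sp f L l1 \<in> {0<..<L}" using sp_props(1)[OF f L l] .
  note D = decomp[OF f L l]
  have "Bm L l2 l1 (Bm L l1 l2 f) =
     Bm L l2 l1 (tensor (L - sp f L l1) (sp f L l1) l2 (ph2 L l1 f) (ph1 L l1 f))"
    using Bm_mem(1)[OF L l f] by simp
  also have "\<dots> = tensor (sp f L l1) (L - sp f L l1) l1 (ph1 L l1 f) (ph2 L l1 f)"
    using S D(1,2) by (intro Bm_prop L l(2,1)) auto
  also have "\<dots> = f" using D(3) by simp
  finally show ?thesis .
qed


definition Ex :: "real \<Rightarrow> real \<Rightarrow> real \<Rightarrow> (real \<Rightarrow> real) \<Rightarrow> real \<Rightarrow> real" where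
  "Ex L l1 l2 f x = (if x \<le> L then f x - l1 else f (x - L) + l2)"

lemma Bm_eval:
  assumes L: "L > 0" and l: "l1 > 0" "l2 > 0" and f: "f \<in> Gmor L (l1 + l2)" and t: "t \<in> {0..L}"
  shows "Bm L l1 l2 f t = Ex L l1 l2 f (t + sp f L l1)"
proof -
  define s where "s = sp f L l1"
  have S: "s \<in> {0<..<L}" using sp_props(1)[OF f L l] unfolding s_def .
  have "Bm L l1 l2 f t = tensor (L - s) s l2 (ph2 L l1 f) (ph1 L l1 f) t"
    using Bm_mem(1)[OF L l f] unfolding s_def by simp
  also have "\<dots> = Ex L l1 l2 f (t + s)"
  proof (cases "t \<le> L - s")
    case True
    then show ?thesis using t S unfolding tensor_def Ex_def ph2_def s_def[symmetric] by simp
  next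
    case False
    then have "t - (L - s) \<in> {0..s}" using t S by auto
    moreover have eq: "t - (L - s) = t + s - L" by simp
    ultimately show ?thesis using t S False unfolding tensor_def Ex_def ph1_def s_def[symmetric] by simp (metis eq)
  qed
  finally show ?thesis unfolding s_def .
qed

lemma Ex_close:
  assumes close: "\<forall>t\<in>{0..L}. \<bar>g t - f t\<bar> < d" and x: "x \<in> {0..2*L}"
  shows "\<bar>Ex L l1 l2 g x - Ex L l1 l2 f x\<bar> < d"
proof (cases "x \<le> L")
  case True
  then have "\<bar>g x - f x\<bar> < d" using close x by auto
  then show ?thesis using True unfolding Ex_def by simp
next
  case False
  then have "\<bar>g (x - L) - f (x - L)\<bar> < d" using close x by auto
  then show ?thesis using False unfolding Ex_def by simp
qed

lemma Ex_ucont: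
  assumes f: "f \<in> Gmor L (l1 + l2)" and L: "L > 0"
    and uc: "\<forall>x\<in>{0..L}. \<forall>y\<in>{0..L}. \<bar>x - y\<bar> < eta \<longrightarrow> \<bar>f x - f y\<bar> < e"
    and x: "x \<in> {0..2*L}" and y: "y \<in> {0..2*L}" and xy: "\<bar>x - y\<bar> < eta"
  shows "\<bar>Ex L l1 l2 f x - Ex L l1 l2 f y\<bar> < 2 * e"
proof -
  have f0: "f 0 = 0" and fL: "f L = l1 + l2" using Gmor_props(5,6)[OF f L] by auto
  have e0: "e > 0" using uc[rule_format, of 0 0] L xy by auto
  have cross: "\<bar>Ex L l1 l2 f x - Ex L l1 l2 f y\<bar> < 2 * e"
    if x: "x \<in> {0..2*L}" and y: "y \<in> {0..2*L}" and xy: "\<bar>x - y\<bar> < eta" and xL: "x \<le> L" and yL: "\<not> y \<le> L"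
    for x y
  proof -
    have a: "\<bar>f x - f L\<bar> < e" using uc x y xy xL yL L by auto
    have b: "\<bar>f (y - L) - f 0\<bar> < e" using uc x y xy xL yL L by auto
    have "Ex L l1 l2 f x - Ex L l1 l2 f y = (f x - f L) - (f (y - L) - f 0)"
      using xL yL f0 fL unfolding Ex_def by simp
    then show ?thesis using a b by linarith
  qed
  show ?thesis
  proof (cases "x \<le> L")
    case xL: True
    show ?thesis
    proof (cases "y \<le> L")
      case True
      then have "\<bar>f x - f y\<bar> < e" using uc x y xy xL by auto
      then show ?thesis using xL True e0 unfolding Ex_def by simp
    next
      case False
      then show ?thesis using cross[OF x y xy xL] by simp
    qed
  next
    case xL: False
    show ?thesis
    proof (cases "y \<le> L")
      case True
      have "\<bar>y - x\<bar> < eta" using xy by simp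
      then show ?thesis using cross[OF y x _ True xL] by simp
    next
      case False
      then have "\<bar>f (x - L) - f (y - L)\<bar> < e" using uc x y xy xL by auto
      then show ?thesis using xL False e0 unfolding Ex_def by simp
    qed
  qed
qed

lemma Bm_ucont:
  assumes L: "L > 0" and l: "l1 > 0" "l2 > 0" and f: "f \<in> Gmor L (l1 + l2)" and e: "e > 0"
  shows "\<exists>d>0. \<forall>g\<in>Gmor L (l1 + l2). (\<forall>t\<in>{0..L}. \<bar>g t - f t\<bar> < d) \<longrightarrow>
            (\<forall>t\<in>{0..L}. \<bar>Bm L l1 l2 g t - Bm L l1 l2 f t\<bar> < e)"
proof -
  note F = Gmor_props[OF f L]
  have "uniformly_continuous_on {0..L} f"
    using compact_uniformly_continuous[OF F(1) compact_Icc] .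
  then obtain eta where eta: "eta > 0"
    and uc0: "\<forall>x\<in>{0..L}. \<forall>y\<in>{0..L}. dist y x < eta \<longrightarrow> dist (f y) (f x) < e / 4"
    unfolding uniformly_continuous_on_def using e by (metis divide_pos_pos zero_less_numeral)
  have uc: "\<forall>x\<in>{0..L}. \<forall>y\<in>{0..L}. \<bar>x - y\<bar> < eta \<longrightarrow> \<bar>f x - f y\<bar> < e / 4"
    using uc0 by (simp add: dist_real_def abs_minus_commute)
  define s where "s = sp f L l1"
  have S: "s \<in> {0<..<L}" "f s = l1" using sp_props[OF f L l] unfolding s_def by auto
  define eta' where "eta' = min eta (min s (L - s)) / 2"
  have m: "min eta (min s (L - s)) \<le> eta" "min eta (min s (L - s)) \<le> s"
    "min eta (min s (L - s)) \<le> L - s" "min eta (min s (L - s)) > 0" using eta S by auto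
  have eta': "eta' > 0" "eta' < eta" "s - eta' \<ge> 0" "s + eta' \<le> L"
    using m unfolding eta'_def by linarith+
  have fa: "f (s - eta') < l1" using F(4)[of "s - eta'" s] S eta' by auto
  have fb: "f (s + eta') > l1" using F(4)[of s "s + eta'"] S eta' by auto
  define gam where "gam = min (l1 - f (s - eta')) (f (s + eta') - l1)"
  have gam: "gam > 0" using fa fb unfolding gam_def by auto
  define d where "d = min gam (e / 2)"
  have d: "d > 0" using gam e unfolding d_def by auto
  show ?thesis
  proof (intro exI[of _ d] conjI d ballI impI)
    fix g t assume g: "g \<in> Gmor L (l1 + l2)" and close: "\<forall>t\<in>{0..L}. \<bar>g t - f t\<bar> < d"
      and t: "t \<in> {0..L}"
    note G = Gmor_props[OF g L]
    define s' where "s' = sp g L l1"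
    have S': "s' \<in> {0<..<L}" "g s' = l1" using sp_props[OF g L l] unfolding s'_def by auto
    have ga: "g (s - eta') < l1"
      using close[rule_format, of "s - eta'"] eta' S unfolding d_def gam_def by auto
    have gb: "g (s + eta') > l1"
      using close[rule_format, of "s + eta'"] eta' S unfolding d_def gam_def by auto
    have "s - eta' < s'"
    proof (rule ccontr)
      assume "\<not> s - eta' < s'"
      then have "s' = s - eta' \<or> s' < s - eta'" by auto
      then have "g s' \<le> g (s - eta')" using G(4)[of s' "s - eta'"] S' eta' S by force
      then show False using ga S' by simp
    qed
    moreover have "s' < s + eta'"
    proof (rule ccontr)
      assume "\<not> s' < s + eta'"
      then have "s' = s + eta' \<or> s + eta' < s'" by auto
      then have "g (s + eta') \<le> g s'" using G(4)[of "s + eta'" s'] S' eta' S by force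
      then show False using gb S' by simp
    qed
    ultimately have ss: "\<bar>(t + s') - (t + s)\<bar> < eta" using eta' by auto
    have x1: "t + s' \<in> {0..2*L}" "t + s \<in> {0..2*L}" using t S S' by auto
    have c1: "\<bar>Ex L l1 l2 g (t + s') - Ex L l1 l2 f (t + s')\<bar> < d"
      using Ex_close[OF close x1(1)] .
    have c2: "\<bar>Ex L l1 l2 f (t + s') - Ex L l1 l2 f (t + s)\<bar> < 2 * (e / 4)"
      using Ex_ucont[OF f L uc x1 ss] .
    have "Bm L l1 l2 g t - Bm L l1 l2 f t = Ex L l1 l2 g (t + s') - Ex L l1 l2 f (t + s)"
      using Bm_eval[OF L l g t] Bm_eval[OF L l f t] unfolding s_def s'_def by simp
    then show "\<bar>Bm L l1 l2 g t - Bm L l1 l2 f t\<bar> < e"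
      using c1 c2 unfolding d_def by linarith
  qed
qed


lemma topspace_co: "topspace (compact_open L M) = Gmor L M"
  unfolding compact_open_def by (rule topspace_subbase)

lemma sub_uopen:
  assumes L: "L > 0" and K: "compact K" "K \<subseteq> {0..L}" and U: "open U"
    and f: "f \<in> Gmor L M" and fKU: "f ` K \<subseteq> U"
  shows "\<exists>e>0. \<forall>g\<in>Gmor L M. (\<forall>t\<in>{0..L}. \<bar>g t - f t\<bar> < e) \<longrightarrow> g ` K \<subseteq> U"
proof -
  note F = Gmor_props[OF f L]
  have cK: "compact (f ` K)"
    using compact_continuous_image[OF continuous_on_subset[OF F(1) K(2)] K(1)] .
  have "closed (- U)" using U by auto
  moreover have "f ` K \<inter> - U = {}" using fKU by auto
  ultimately obtain d where d: "d > 0" and sep: "\<forall>x\<in>f ` K. \<forall>y\<in>- U. d \<le> dist x y"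
    using separate_compact_closed[OF cK] by blast
  show ?thesis
  proof (intro exI[of _ d] conjI d ballI impI subsetI)
    fix g y assume g: "g \<in> Gmor L M" and close: "\<forall>t\<in>{0..L}. \<bar>g t - f t\<bar> < d" and y: "y \<in> g ` K"
    then obtain x where x: "x \<in> K" "y = g x" by auto
    have "\<bar>g x - f x\<bar> < d" using close x K(2) by auto
    show "y \<in> U"
    proof (rule ccontr)
      assume "y \<notin> U"
      then have "d \<le> dist (f x) (g x)" using sep x by auto
      then show False using \<open>\<bar>g x - f x\<bar> < d\<close> by (simp add: dist_real_def abs_minus_commute)
    qed
  qed
qed

lemma uopen_openin:
  assumes L: "L > 0" and Ssub: "S \<subseteq> Gmor L M"
    and US: "\<forall>f\<in>S. \<exists>e>0. \<forall>g\<in>Gmor L M. (\<forall>t\<in>{0..L}. \<bar>g t - f t\<bar> < e) \<longrightarrow> g \<in> S"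
  shows "openin (compact_open L M) S"
proof (subst openin_subopen, intro ballI)
  fix f assume fS: "f \<in> S"
  then obtain e where e: "e > 0" and eS: "\<forall>g\<in>Gmor L M. (\<forall>t\<in>{0..L}. \<bar>g t - f t\<bar> < e) \<longrightarrow> g \<in> S"
    using US by blast
  have f: "f \<in> Gmor L M" using Ssub fS by auto
  note F = Gmor_props[OF f L]
  have "uniformly_continuous_on {0..L} f"
    using compact_uniformly_continuous[OF F(1) compact_Icc] .
  then obtain del where del: "del > 0"
    and uc0: "\<forall>x\<in>{0..L}. \<forall>y\<in>{0..L}. dist y x < del \<longrightarrow> dist (f y) (f x) < e / 4"
    unfolding uniformly_continuous_on_def using e by (metis divide_pos_pos zero_less_numeral)
  have uc: "\<forall>x\<in>{0..L}. \<forall>y\<in>{0..L}. \<bar>x - y\<bar> < del \<longrightarrow> \<bar>f x - f y\<bar> < e / 4"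
    using uc0 by (simp add: dist_real_def abs_minus_commute)
  obtain n :: nat where n: "L / del < real n" using reals_Archimedean2 by blast
  have npos: "real n > 0" using n L del by (smt (verit) divide_pos_pos)
  have Ln: "L / real n < del" using n npos del L by (simp add: field_simps)
  define c where "c i = real i * L / real n" for i :: nat
  define K where "K i = {0..L} \<inter> {c i - L / real n .. c i + L / real n}" for i
  define U where "U i = ball (f (c i)) (e / 2)" for i
  define T where "T = Gmor L M \<inter> \<Inter>((\<lambda>i. {g \<in> Gmor L M. g ` K i \<subseteq> U i}) ` {..n})"
  have ci: "c i \<in> {0..L}" if "i \<le> n" for i
  proof -
    have "real i \<le> real n" using that by simp
    then have "real i * L \<le> real n * L" using L by (simp add: mult_right_mono)
    then show ?thesis unfolding c_def using npos L by (simp add: field_simps)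
  qed
  have "openin (compact_open L M) T"
    unfolding compact_open_def openin_subbase
  proof (rule arbitrary_union_of_inc)
    show "((finite intersection_of
         (\<lambda>S. \<exists>K U. compact K \<and> K \<subseteq> {0..L} \<and> open U \<and> S = {f \<in> Gmor L M. f ` K \<subseteq> U}))
       relative_to Gmor L M) T"
      unfolding relative_to_def intersection_of_def T_def
    proof (intro exI conjI)
      show "finite ((\<lambda>i. {g \<in> Gmor L M. g ` K i \<subseteq> U i}) ` {..n})" by simp
      show "(\<lambda>i. {g \<in> Gmor L M. g ` K i \<subseteq> U i}) ` {..n} \<subseteq>
        Collect (\<lambda>S. \<exists>K U. compact K \<and> K \<subseteq> {0..L} \<and> open U \<and> S = {f \<in> Gmor L M. f ` K \<subseteq> U})"
      proof -
        have KU: "\<And>i. compact (K i) \<and> K i \<subseteq> {0..L} \<and> open (U i)"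
          unfolding K_def U_def by (auto intro!: compact_Int_closed)
        then show ?thesis by blast
      qed
    qed auto
  qed
  moreover have "f \<in> T"
  proof -
    have "f ` K i \<subseteq> U i" if i: "i \<le> n" for i
    proof
      fix y assume "y \<in> f ` K i"
      then obtain x where x: "x \<in> K i" and y: "y = f x" by auto
      have xr: "x \<in> {0..L}" "\<bar>x - c i\<bar> \<le> L / real n" using x unfolding K_def by auto
      have "\<bar>x - c i\<bar> < del" using xr Ln by linarith
      then have "\<bar>f x - f (c i)\<bar> < e / 4" using uc xr ci[OF i] by auto
      then show "y \<in> U i" unfolding U_def y using e by (simp add: dist_real_def abs_minus_commute)
    qed
    then show ?thesis unfolding T_def using f by auto
  qed
  moreover have "T \<subseteq> S"
  proof
    fix g assume gT: "g \<in> T"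
    then have g: "g \<in> Gmor L M" unfolding T_def by auto
    have gKU: "\<And>i. i \<le> n \<Longrightarrow> g ` K i \<subseteq> U i" using gT unfolding T_def by auto
    have "\<forall>t\<in>{0..L}. \<bar>g t - f t\<bar> < e"
    proof
      fix t assume t: "t \<in> {0..L}"
      define z where "z = t * real n / L"
      have z0: "0 \<le> z" using t npos L unfolding z_def by simp
      have zn: "z \<le> real n"
      proof -
        have "t * real n \<le> L * real n" using t npos by (simp add: mult_right_mono)
        then show ?thesis unfolding z_def using L by (simp add: field_simps)
      qed
      define i where "i = nat \<lfloor>z\<rfloor>"
      have ri: "real i = of_int \<lfloor>z\<rfloor>" unfolding i_def using z0 by simp
      have i1: "real i \<le> z" using ri by linarith
      have i2: "z < real i + 1" using ri by linarith
      have iN: "i \<le> n" using i1 zn by linarith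
      have "c i = real i * L / real n" by (simp add: c_def)
      have a1: "c i \<le> t"
      proof -
        have "real i * L \<le> z * L" using i1 L by (simp add: mult_right_mono)
        also have "z * L = t * real n" unfolding z_def using L by simp
        finally show ?thesis unfolding c_def using npos by (simp add: field_simps)
      qed
      have a2: "t < c i + L / real n"
      proof -
        have "z * L < (real i + 1) * L" using i2 L by simp
        moreover have "z * L = t * real n" unfolding z_def using L by simp
        ultimately have "t * real n < (real i + 1) * L" by simp
        then show ?thesis unfolding c_def using npos by (simp add: field_simps)
      qed
      have tK: "t \<in> K i" unfolding K_def using t a1 a2 by auto
      have "g t \<in> U i" using gKU[OF iN] tK by auto
      then have b1: "\<bar>g t - f (c i)\<bar> < e / 2" unfolding U_def by (simp add: dist_real_def abs_minus_commute)
      have "\<bar>t - c i\<bar> < del" using a1 a2 Ln by linarith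
      then have b2: "\<bar>f t - f (c i)\<bar> < e / 4" using uc t ci[OF iN] by auto
      show "\<bar>g t - f t\<bar> < e" using b1 b2 e by linarith
    qed
    then show "g \<in> S" using eS g by blast
  qed
  ultimately show "\<exists>T. openin (compact_open L M) T \<and> f \<in> T \<and> T \<subseteq> S" by blast
qed

lemma Bm_cont:
  assumes L: "L > 0" and l: "l1 > 0" "l2 > 0"
  shows "continuous_map (compact_open L (l1 + l2)) (compact_open L (l2 + l1)) (Bm L l1 l2)"
proof -
  have "continuous_map (compact_open L (l1 + l2))
     (topology (arbitrary union_of ((finite intersection_of
       (\<lambda>S. \<exists>K U. compact K \<and> K \<subseteq> {0..L} \<and> open U \<and> S = {f \<in> Gmor L (l2 + l1). f ` K \<subseteq> U}))
       relative_to Gmor L (l2 + l1)))) (Bm L l1 l2)"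
  proof (rule continuous_map_into_topology_subbase)
    fix x assume "x \<in> topspace (compact_open L (l1 + l2))"
    then have "x \<in> Gmor L (l1 + l2)" unfolding topspace_co .
    then show "Bm L l1 l2 x \<in> topspace (topology (arbitrary union_of ((finite intersection_of
       (\<lambda>S. \<exists>K U. compact K \<and> K \<subseteq> {0..L} \<and> open U \<and> S = {f \<in> Gmor L (l2 + l1). f ` K \<subseteq> U}))
       relative_to Gmor L (l2 + l1))))"
      using Bm_mem(2)[OF L l] by simp
  next
    fix V assume "\<exists>K U. compact K \<and> K \<subseteq> {0..L} \<and> open U \<and> V = {f \<in> Gmor L (l2 + l1). f ` K \<subseteq> U}"
    then obtain K U where K: "compact K" "K \<subseteq> {0..L}" and U: "open U"
      and V: "V = {f \<in> Gmor L (l2 + l1). f ` K \<subseteq> U}" by blast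
    show "openin (compact_open L (l1 + l2)) {x \<in> topspace (compact_open L (l1 + l2)). Bm L l1 l2 x \<in> V}"
      unfolding topspace_co
    proof (rule uopen_openin[OF L], simp, intro ballI)
      fix f assume "f \<in> {x \<in> Gmor L (l1 + l2). Bm L l1 l2 x \<in> V}"
      then have f: "f \<in> Gmor L (l1 + l2)" and fV: "Bm L l1 l2 f \<in> V" by auto
      have Bf: "Bm L l1 l2 f \<in> Gmor L (l2 + l1)" "Bm L l1 l2 f ` K \<subseteq> U" using fV V by auto
      obtain e where e: "e > 0" and eU: "\<forall>g\<in>Gmor L (l2 + l1). (\<forall>t\<in>{0..L}. \<bar>g t - Bm L l1 l2 f t\<bar> < e) \<longrightarrow> g ` K \<subseteq> U"
        using sub_uopen[OF L K U Bf] by blast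
      obtain d where d: "d > 0" and dB: "\<forall>g\<in>Gmor L (l1 + l2). (\<forall>t\<in>{0..L}. \<bar>g t - f t\<bar> < d) \<longrightarrow>
            (\<forall>t\<in>{0..L}. \<bar>Bm L l1 l2 g t - Bm L l1 l2 f t\<bar> < e)"
        using Bm_ucont[OF L l f e] by blast
      show "\<exists>e>0. \<forall>g\<in>Gmor L (l1 + l2). (\<forall>t\<in>{0..L}. \<bar>g t - f t\<bar> < e) \<longrightarrow> g \<in> {x \<in> Gmor L (l1 + l2). Bm L l1 l2 x \<in> V}"
      proof (intro exI[of _ d] conjI d ballI impI)
        fix g assume g: "g \<in> Gmor L (l1 + l2)" and close: "\<forall>t\<in>{0..L}. \<bar>g t - f t\<bar> < d"
        have Bg: "Bm L l1 l2 g \<in> Gmor L (l2 + l1)" using Bm_mem(2)[OF L l g] .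
        have "Bm L l1 l2 g ` K \<subseteq> U" using eU Bg dB g close by blast
        then show "g \<in> {x \<in> Gmor L (l1 + l2). Bm L l1 l2 x \<in> V}" using g Bg V by auto
      qed
    qed
  qed
  then show ?thesis unfolding compact_open_def .
qed

theorem proposition4p8:
  fixes L l1 l2 :: real
  assumes "L > 0" and "l1 > 0" and "l2 > 0"
  shows "(\<exists>!B. B \<in> Gmor L (l1 + l2) \<rightarrow>\<^sub>E Gmor L (l2 + l1) \<and>
            (\<forall>l1' l2' phi1 phi2. l1' > 0 \<longrightarrow> l2' > 0 \<longrightarrow> l1' + l2' = L \<longrightarrow>
                phi1 \<in> Gmor l1' l1 \<longrightarrow> phi2 \<in> Gmor l2' l2 \<longrightarrow>
                B (tensor l1' l2' l1 phi1 phi2) = tensor l2' l1' l2 phi2 phi1))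
       \<and> (\<forall>B. B \<in> Gmor L (l1 + l2) \<rightarrow>\<^sub>E Gmor L (l2 + l1) \<and>
            (\<forall>l1' l2' phi1 phi2. l1' > 0 \<longrightarrow> l2' > 0 \<longrightarrow> l1' + l2' = L \<longrightarrow>
                phi1 \<in> Gmor l1' l1 \<longrightarrow> phi2 \<in> Gmor l2' l2 \<longrightarrow>
                B (tensor l1' l2' l1 phi1 phi2) = tensor l2' l1' l2 phi2 phi1)
            \<longrightarrow> homeomorphic_map (compact_open L (l1 + l2)) (compact_open L (l2 + l1)) B)"
proof -
  note L = assms(1) and l = assms(2,3)
  have ex: "Bm L l1 l2 \<in> Gmor L (l1 + l2) \<rightarrow>\<^sub>E Gmor L (l2 + l1) \<and>
            (\<forall>l1' l2' phi1 phi2. l1' > 0 \<longrightarrow> l2' > 0 \<longrightarrow> l1' + l2' = L \<longrightarrow>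
                phi1 \<in> Gmor l1' l1 \<longrightarrow> phi2 \<in> Gmor l2' l2 \<longrightarrow>
                Bm L l1 l2 (tensor l1' l2' l1 phi1 phi2) = tensor l2' l1' l2 phi2 phi1)"
    using Bm_PiE[OF L l] Bm_prop[OF L l] by blast
  have hm: "homeomorphic_map (compact_open L (l1 + l2)) (compact_open L (l2 + l1)) (Bm L l1 l2)"
    unfolding homeomorphic_map_maps homeomorphic_maps_def topspace_co
  proof (intro exI[of _ "Bm L l2 l1"] conjI ballI)
    show "continuous_map (compact_open L (l1 + l2)) (compact_open L (l2 + l1)) (Bm L l1 l2)"
      using Bm_cont[OF L l] .
    show "continuous_map (compact_open L (l2 + l1)) (compact_open L (l1 + l2)) (Bm L l2 l1)"
      using Bm_cont[OF L l(2,1)] .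
    fix x assume "x \<in> Gmor L (l1 + l2)"
    then show "Bm L l2 l1 (Bm L l1 l2 x) = x" using Bm_inv[OF L l] by blast
  next
    fix y assume "y \<in> Gmor L (l2 + l1)"
    then show "Bm L l1 l2 (Bm L l2 l1 y) = y" using Bm_inv[OF L l(2,1)] by blast
  qed
  show ?thesis
  proof (intro conjI allI impI)
    show "\<exists>!B. B \<in> Gmor L (l1 + l2) \<rightarrow>\<^sub>E Gmor L (l2 + l1) \<and>
            (\<forall>l1' l2' phi1 phi2. l1' > 0 \<longrightarrow> l2' > 0 \<longrightarrow> l1' + l2' = L \<longrightarrow>
                phi1 \<in> Gmor l1' l1 \<longrightarrow> phi2 \<in> Gmor l2' l2 \<longrightarrow>
                B (tensor l1' l2' l1 phi1 phi2) = tensor l2' l1' l2 phi2 phi1)"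
      using ex Bm_unique[OF L l] by (intro ex1I[of _ "Bm L l1 l2"]) blast+
  next
    fix B assume "B \<in> Gmor L (l1 + l2) \<rightarrow>\<^sub>E Gmor L (l2 + l1) \<and>
            (\<forall>l1' l2' phi1 phi2. l1' > 0 \<longrightarrow> l2' > 0 \<longrightarrow> l1' + l2' = L \<longrightarrow>
                phi1 \<in> Gmor l1' l1 \<longrightarrow> phi2 \<in> Gmor l2' l2 \<longrightarrow>
                B (tensor l1' l2' l1 phi1 phi2) = tensor l2' l1' l2 phi2 phi1)"
    then have "B = Bm L l1 l2" using Bm_unique[OF L l] by blast
    then show "homeomorphic_map (compact_open L (l1 + l2)) (compact_open L (l2 + l1)) B"
      using hm by simp
  qed
qed

end
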